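(* Let $T=\{t_1,\ldots,t_N\}$ be documents, each containing at most $L$ distinct words from a dictionary $\{w_1,\ldots,w_D\}$ ($D\ge 2$). For a word $w$ let $\#(w)$ be the number of documents containing $w$ and for words $x,y$ let $\#(x,y)$ be the number of documents containing both. Fix $\epsilon\in(0,1]$ and $p=2\log D$. Consider the MapReduce mapper that, for every document $t$ and every unordered pair of distinct words $(w_i,w_j)$ in $t$, independently emits the key-value pair $((w_i,w_j)\to 1)$ with probability $\min\!\left(1,\frac{p}{\epsilon}\frac{1}{\sqrt{\#(w_i)}\sqrt{\#(w_j)}}\right)$ (CosineSampleEmit). Then the expected total number of emitted pairs (the shuffle size) is at most $\frac{p}{\epsilon}LD=O(DL\log(D)/\epsilon)$, independently of $N$. Moreover, this is tight up to the factor $\log(D)/\epsilon$: whenever $L\ge 2$ divides $D$, there is an input of this form with at least $(D/L)\binom{L}{2}=\Omega(DL)$ pairs of words having cosine similarity $1\ge\epsilon$, so any algorithm that outputs all pairs with cosine similarity at least $\epsilon$ (in particular a shuffle of CosineSampleEmit from which these are computed) must produce $\Omega(DL)$ output in the worst case.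
   Context: Cosine similarity of words $x,y$ is $\frac{\#(x,y)}{\sqrt{\#(x)}\sqrt{\#(y)}}$. The shuffle size is the total number of key-value pairs emitted by the mappers over all documents. $\log$ denotes the natural logarithm. *)

theory Defs
  imports "HOL-Probability.Probability"
begin

text \<open>A corpus: N documents T 0, ..., T (N-1), each a set of words (words are natural numbers;
  the dictionary is {0..<D}).\<close>

definition occ :: "nat \<Rightarrow> (nat \<Rightarrow> nat set) \<Rightarrow> nat \<Rightarrow> nat" where
  "occ N T w = card {k. k < N \<and> w \<in> T k}"

definition co_occ :: "nat \<Rightarrow> (nat \<Rightarrow> nat set) \<Rightarrow> nat \<Rightarrow> nat \<Rightarrow> nat" where
  "co_occ N T x y = card {k. k < N \<and> x \<in> T k \<and> y \<in> T k}"

definition cosine :: "nat \<Rightarrow> (nat \<Rightarrow> nat set) \<Rightarrow> nat \<Rightarrow> nat \<Rightarrow> real" where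
  "cosine N T x y = real (co_occ N T x y) / (sqrt (real (occ N T x)) * sqrt (real (occ N T y)))"

text \<open>The potential emissions of the mapper: one per document k and unordered pair of distinct
  words {a,b} of that document.\<close>
definition emit_slots :: "nat \<Rightarrow> (nat \<Rightarrow> nat set) \<Rightarrow> (nat \<times> nat set) set" where
  "emit_slots N T = {(k, e). k < N \<and> (\<exists>a b. a \<in> T k \<and> b \<in> T k \<and> a \<noteq> b \<and> e = {a, b})}"

definition emit_prob :: "real \<Rightarrow> real \<Rightarrow> nat \<Rightarrow> (nat \<Rightarrow> nat set) \<Rightarrow> nat set \<Rightarrow> real" where
  "emit_prob p \<epsilon> N T e =
     (let a = Min e; b = Max e in
      min 1 (p / \<epsilon> * (1 / (sqrt (real (occ N T a)) * sqrt (real (occ N T b))))))"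

definition cosine_sample_emit :: "real \<Rightarrow> real \<Rightarrow> nat \<Rightarrow> (nat \<Rightarrow> nat set) \<Rightarrow> (nat \<times> nat set \<Rightarrow> bool) pmf" where
  "cosine_sample_emit p \<epsilon> N T =
     Pi_pmf (emit_slots N T) False (\<lambda>(k, e). bernoulli_pmf (emit_prob p \<epsilon> N T e))"

definition shuffle_size :: "nat \<Rightarrow> (nat \<Rightarrow> nat set) \<Rightarrow> (nat \<times> nat set \<Rightarrow> bool) \<Rightarrow> nat" where
  "shuffle_size N T f = card {s \<in> emit_slots N T. f s}"

end

theory Submission
  imports Defs
begin

lemma exp_card_Pi:
  fixes S :: "'a set" and q :: "'a \<Rightarrow> real"
  assumes "finite S" "\<And>s. s \<in> S \<Longrightarrow> 0 \<le> q s \<and> q s \<le> 1"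
  shows "measure_pmf.expectation (Pi_pmf S False (\<lambda>s. bernoulli_pmf (q s)))
           (\<lambda>f. real (card {s\<in>S. f s})) = (\<Sum>s\<in>S. q s)"
proof -
  let ?P = "Pi_pmf S False (\<lambda>s. bernoulli_pmf (q s))"
  have c: "real (card {s\<in>S. f s}) = (\<Sum>s\<in>S. (if f s then 1 else 0))" for f
    using assms(1) by (simp add: sum.If_cases Int_def)
  have "measure_pmf.expectation ?P (\<lambda>f. real (card {s\<in>S. f s}))
      = measure_pmf.expectation ?P (\<lambda>f. \<Sum>s\<in>S. (if f s then 1 else 0::real))"
    by (simp add: c)
  also have "\<dots> = (\<Sum>s\<in>S. measure_pmf.expectation ?P (\<lambda>f. if f s then 1 else 0::real))"
    by (subst Bochner_Integration.integral_sum) (auto intro!: measure_pmf.integrable_const_bound[where B=1])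
  also have "\<dots> = (\<Sum>s\<in>S. q s)"
  proof (rule sum.cong[OF refl])
    fix s assume s: "s \<in> S"
    have "measure_pmf.expectation ?P (\<lambda>f. if f s then 1 else 0::real)
        = measure_pmf.expectation (map_pmf (\<lambda>f. f s) ?P) (\<lambda>b. if b then 1 else 0::real)"
      by simp
    also have "\<dots> = measure_pmf.expectation (bernoulli_pmf (q s)) (\<lambda>b. if b then 1 else 0::real)"
      using Pi_pmf_component[OF assms(1), of s False] s by simp
    also have "\<dots> = q s" using assms(2)[OF s] by simp
    finally show "measure_pmf.expectation ?P (\<lambda>f. if f s then 1 else 0::real) = q s" .
  qed
  finally show ?thesis .
qed

lemma amgm_inv:
  fixes x y c :: real
  assumes "x > 0" "y > 0" "c \<ge> 0"
  shows "min 1 (c * (1 / (sqrt x * sqrt y))) \<le> c * (1/x + 1/y) / 2"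
proof -
  define u where "u = 1 / sqrt x"
  define v where "v = 1 / sqrt y"
  have uu: "u^2 = 1/x" using assms by (simp add: u_def power_divide)
  have vv: "v^2 = 1/y" using assms by (simp add: v_def power_divide)
  have "u * v \<le> (u^2 + v^2)/2" using sum_squares_ge_zero[of "u-v" 0]
    by (simp add: power2_eq_square algebra_simps)
  hence "1 / (sqrt x * sqrt y) \<le> (1/x + 1/y)/2" using uu vv by (simp add: u_def v_def)
  hence "c * (1 / (sqrt x * sqrt y)) \<le> c * ((1/x + 1/y)/2)" using assms(3) by (rule mult_left_mono)
  moreover have "min 1 (c * (1 / (sqrt x * sqrt y))) \<le> c * (1 / (sqrt x * sqrt y))" by simp
  ultimately show ?thesis by linarith
qed

lemma sum_pairs_half:
  fixes h :: "nat \<Rightarrow> real"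
  assumes "finite A"
  shows "(\<Sum>x\<in>A \<times> A. (h (fst x) + h (snd x)) / 2) = real (card A) * sum h A"
proof -
  have "(\<Sum>x\<in>A \<times> A. (h (fst x) + h (snd x)) / 2) = (\<Sum>a\<in>A. \<Sum>b\<in>A. (h a + h b) / 2)"
    by (simp add: sum.cartesian_product case_prod_unfold)
  also have "\<dots> = (\<Sum>a\<in>A. (real (card A) * h a + sum h A) / 2)"
    by (simp add: sum.distrib sum_divide_distrib[symmetric])
  also have "\<dots> = real (card A) * sum h A"
    by (simp add: sum_divide_distrib[symmetric] sum.distrib sum_distrib_left[symmetric])
  finally show ?thesis .
qed

lemma occ_pos:
  assumes "k < N" "a \<in> T k"
  shows "occ N T a \<ge> 1"
proof -
  have "k \<in> {k. k < N \<and> a \<in> T k}" using assms by simp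
  moreover have "finite {k. k < N \<and> a \<in> T k}" by simp
  ultimately have "card {k. k < N \<and> a \<in> T k} \<noteq> 0" by (metis card_0_eq empty_iff)
  thus ?thesis unfolding occ_def by linarith
qed

lemma emit_prob_bound:
  assumes c: "p / \<epsilon> \<ge> 0" and k: "k < N" and ab: "a \<in> T k" "b \<in> T k" "a \<noteq> b"
  shows "emit_prob p \<epsilon> N T {a, b} \<le> p / \<epsilon> * (1 / real (occ N T a) + 1 / real (occ N T b)) / 2"
proof -
  have pa: "real (occ N T a) > 0" and pb: "real (occ N T b) > 0"
    using occ_pos[of k N a T, OF k ab(1)] occ_pos[of k N b T, OF k ab(2)] by auto
  show ?thesis
  proof (cases "a < b")
    case True
    hence "Min {a,b} = a" "Max {a,b} = b" by auto
    thus ?thesis unfolding emit_prob_def Let_def using amgm_inv[OF pa pb c] by simp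
  next
    case False
    hence "Min {a,b} = b" "Max {a,b} = a" using ab(3) by auto
    thus ?thesis unfolding emit_prob_def Let_def using amgm_inv[OF pb pa c] by (simp add: add.commute)
  qed
qed

lemma emit_prob_nonneg:
  assumes c: "p / \<epsilon> \<ge> 0"
  shows "0 \<le> emit_prob p \<epsilon> N T e \<and> emit_prob p \<epsilon> N T e \<le> 1"
proof -
  define z where "z = p / \<epsilon> * (1 / (sqrt (real (occ N T (Min e))) * sqrt (real (occ N T (Max e)))))"
  have "0 \<le> z" unfolding z_def using c by (intro mult_nonneg_nonneg) auto
  hence "0 \<le> min 1 z \<and> min 1 z \<le> 1" by simp
  thus ?thesis unfolding emit_prob_def Let_def z_def .
qed

lemma part1:
  assumes c: "p / \<epsilon> \<ge> 0" and hT: "\<forall>k<N. T k \<subseteq> {..<D} \<and> card (T k) \<le> L"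
  shows "measure_pmf.expectation (cosine_sample_emit p \<epsilon> N T)
               (\<lambda>f. real (shuffle_size N T f)) \<le> p / \<epsilon> * real L * real D"
proof -
  define c where "c = p / \<epsilon>"
  define q where "q = emit_prob p \<epsilon> N T"
  define h where "h = (\<lambda>a. 1 / real (occ N T a))"
  define S where "S = emit_slots N T"
  define P where "P = (\<lambda>k. {e. \<exists>a b. a \<in> T k \<and> b \<in> T k \<and> a \<noteq> b \<and> e = {a, b}})"
  have SP: "S = Sigma {..<N} P" unfolding S_def P_def emit_slots_def by auto
  have finT: "finite (T k)" if "k < N" for k using hT that finite_subset by blast
  have finP: "finite (P k)" if "k < N" for k
  proof -
    have "P k \<subseteq> Pow (T k)" unfolding P_def by auto
    thus ?thesis using finT[OF that] finite_subset by blast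
  qed
  have finS: "finite S" unfolding SP using finP by auto
  have cse: "cosine_sample_emit p \<epsilon> N T = Pi_pmf S False (\<lambda>s. bernoulli_pmf (q (snd s)))"
    unfolding cosine_sample_emit_def S_def q_def by (simp add: case_prod_unfold)
  have E: "measure_pmf.expectation (cosine_sample_emit p \<epsilon> N T)
               (\<lambda>f. real (shuffle_size N T f)) = (\<Sum>s\<in>S. q (snd s))"
    unfolding cse shuffle_size_def S_def[symmetric]
    by (rule exp_card_Pi[OF finS]) (use emit_prob_nonneg[OF c] in \<open>simp add: q_def\<close>)
  have hnn: "h a \<ge> 0" for a unfolding h_def by simp
  have perk: "(\<Sum>e\<in>P k. q e) \<le> c * real L * sum h (T k)" if k: "k < N" for k
  proof -
    define Q where "Q = {x \<in> T k \<times> T k. fst x \<noteq> snd x}"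
    have PQ: "P k = (\<lambda>x. {fst x, snd x}) ` Q" unfolding P_def Q_def by force
    have finQ: "finite Q" unfolding Q_def using finT[OF k] by simp
    have "(\<Sum>e\<in>P k. q e) \<le> (\<Sum>x\<in>Q. q {fst x, snd x})"
      unfolding PQ using sum_image_le[OF finQ, of q "\<lambda>x. {fst x, snd x}"]
        emit_prob_nonneg[OF c] by (simp add: q_def o_def)
    also have "\<dots> \<le> (\<Sum>x\<in>Q. c * ((h (fst x) + h (snd x)) / 2))"
      by (rule sum_mono) (use emit_prob_bound[OF c k] in \<open>auto simp: Q_def q_def h_def c_def\<close>)
    also have "\<dots> \<le> (\<Sum>x\<in>T k \<times> T k. c * ((h (fst x) + h (snd x)) / 2))"
      by (rule sum_mono2) (use finT[OF k] hnn c mult_nonneg_nonneg[OF c hnn] in \<open>auto simp: Q_def c_def\<close>)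
    also have "\<dots> = c * (real (card (T k)) * sum h (T k))"
      unfolding sum_distrib_left[symmetric] sum_pairs_half[OF finT[OF k]] by (rule refl)
    also have "\<dots> \<le> c * (real L * sum h (T k))"
      using hT k c hnn by (intro mult_left_mono mult_right_mono) (auto simp: c_def sum_nonneg)
    finally show ?thesis by simp
  qed
  have inner: "(\<Sum>k<N. sum h (T k)) \<le> real D"
  proof -
    have "(\<Sum>k<N. sum h (T k)) = (\<Sum>k<N. \<Sum>a<D. if a \<in> T k then h a else 0)"
    proof (rule sum.cong[OF refl])
      fix k assume "k \<in> {..<N}"
      hence "T k \<subseteq> {..<D}" using hT by auto
      hence "{..<D} \<inter> {a. a \<in> T k} = T k" by auto
      thus "sum h (T k) = (\<Sum>a<D. if a \<in> T k then h a else 0)"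
        by (simp add: sum.If_cases)
    qed
    also have "\<dots> = (\<Sum>a<D. \<Sum>k<N. if a \<in> T k then h a else 0)"
      by (rule sum.swap)
    also have "\<dots> = (\<Sum>a<D. h a * real (occ N T a))"
    proof (rule sum.cong[OF refl])
      fix a
      have "{..<N} \<inter> {k. a \<in> T k} = {k. k < N \<and> a \<in> T k}" by auto
      thus "(\<Sum>k<N. if a \<in> T k then h a else 0) = h a * real (occ N T a)"
        by (simp add: sum.If_cases occ_def)
    qed
    also have "\<dots> \<le> (\<Sum>a<D. 1)"
      by (rule sum_mono) (simp add: h_def)
    finally show ?thesis by simp
  qed
  have cL: "c * real L \<ge> 0" using c unfolding c_def by (intro mult_nonneg_nonneg) auto
  have "(\<Sum>s\<in>S. q (snd s)) = (\<Sum>k<N. \<Sum>e\<in>P k. q e)"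
    unfolding SP by (subst sum.Sigma) (use finP in \<open>auto simp: case_prod_unfold\<close>)
  also have "\<dots> \<le> (\<Sum>k<N. c * real L * sum h (T k))"
    by (rule sum_mono) (use perk in auto)
  also have "\<dots> = c * real L * (\<Sum>k<N. sum h (T k))"
    by (simp add: sum_distrib_left)
  also have "\<dots> \<le> c * real L * real D"
    by (rule mult_left_mono[OF inner cL])
  finally have "(\<Sum>s\<in>S. q (snd s)) \<le> c * real L * real D" .
  thus ?thesis using E by (simp add: c_def)
qed

lemma pairs_card:
  fixes A :: "nat set"
  assumes "finite A"
  shows "card {(x, y). x < y \<and> x \<in> A \<and> y \<in> A} = card A choose 2"
proof -
  have "bij_betw (\<lambda>(x, y). {x, y}) {(x, y). x < y \<and> x \<in> A \<and> y \<in> A} {B. B \<subseteq> A \<and> card B = 2}"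
  proof (rule bij_betwI')
    fix u v assume "u \<in> {(x, y). x < y \<and> x \<in> A \<and> y \<in> A}" "v \<in> {(x, y). x < y \<and> x \<in> A \<and> y \<in> A}"
    thus "((case u of (x, y) \<Rightarrow> {x, y}) = (case v of (x, y) \<Rightarrow> {x, y})) = (u = v)"
      by (auto simp: doubleton_eq_iff)
  next
    fix u assume "u \<in> {(x, y). x < y \<and> x \<in> A \<and> y \<in> A}"
    thus "(case u of (x, y) \<Rightarrow> {x, y}) \<in> {B. B \<subseteq> A \<and> card B = 2}" by auto
  next
    fix B assume "B \<in> {B. B \<subseteq> A \<and> card B = 2}"
    then obtain x y where B: "B = {x, y}" "x \<noteq> y" "B \<subseteq> A" by (auto simp: card_2_iff)
    show "\<exists>u\<in>{(x, y). x < y \<and> x \<in> A \<and> y \<in> A}. B = (case u of (x, y) \<Rightarrow> {x, y})"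
    proof (cases "x < y")
      case True thus ?thesis using B by (intro bexI[of _ "(x, y)"]) auto
    next
      case False thus ?thesis using B by (intro bexI[of _ "(y, x)"]) auto
    qed
  qed
  hence "card {(x, y). x < y \<and> x \<in> A \<and> y \<in> A} = card {B. B \<subseteq> A \<and> card B = 2}"
    by (rule bij_betw_same_card)
  thus ?thesis using n_subsets[OF assms] by simp
qed

lemma part2:
  fixes D L :: nat and \<epsilon> :: real
  assumes "L \<ge> 2" "L dvd D" "\<epsilon> \<le> 1"
  shows "\<exists>N (T :: nat \<Rightarrow> nat set).
               (\<forall>k<N. T k \<subseteq> {..<D} \<and> card (T k) \<le> L) \<and>
               card {(x, y). x < y \<and> y < D \<and> cosine N T x y = 1 \<and> cosine N T x y \<ge> \<epsilon>}
                 \<ge> (D div L) * (L choose 2)"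
proof -
  define m where "m = D div L"
  have Dm: "D = m * L" using assms(2) unfolding m_def by auto
  have Lpos: "L > 0" using assms(1) by simp
  define T where "T = (\<lambda>k. {x. x < D \<and> x div L = k})"
  have Tint: "T k = {k * L..<k * L + L}" if "k < m" for k
  proof -
    have bd: "k * L + L \<le> D" using that Dm by (metis Suc_leI add.commute mult_Suc mult_le_mono1)
    have eq: "x div L = k \<longleftrightarrow> k * L \<le> x \<and> x < k * L + L" for x
    proof
      assume h: "x div L = k"
      have e: "k * L + x mod L = x" using h div_mult_mod_eq[of x L] by simp
      have "x mod L < L" using Lpos by simp
      thus "k * L \<le> x \<and> x < k * L + L" using e by linarith
    next
      assume "k * L \<le> x \<and> x < k * L + L" thus "x div L = k"
        by (intro div_nat_eqI) (auto simp: algebra_simps)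
    qed
    show ?thesis
    proof (rule set_eqI)
      fix x show "x \<in> T k \<longleftrightarrow> x \<in> {k * L..<k * L + L}"
        using eq[of x] bd unfolding T_def mem_Collect_eq atLeastLessThan_iff by (meson less_le_trans)
    qed
  qed
  have cardT: "card (T k) = L" if "k < m" for k using Tint[OF that] by simp
  have divlt: "x div L < m" if "x < D" for x
    using that Dm Lpos by (simp add: less_mult_imp_div_less)
  have occ1: "occ m T x = 1" if "x < D" for x
  proof -
    have "{k. k < m \<and> x \<in> T k} = {x div L}" using divlt[OF that] that by (auto simp: T_def)
    thus ?thesis by (simp add: occ_def)
  qed
  have cos1: "cosine m T x y = 1" if "x < D" "y < D" "x div L = y div L" for x y
  proof -
    have "{k. k < m \<and> x \<in> T k \<and> y \<in> T k} = {x div L}" using divlt that by (auto simp: T_def)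
    hence "co_occ m T x y = 1" by (simp add: co_occ_def)
    thus ?thesis using occ1 that by (simp add: cosine_def)
  qed
  define B where "B = (\<lambda>k. {(x, y). x < y \<and> x \<in> T k \<and> y \<in> T k})"
  define X where "X = {(x, y). x < y \<and> y < D \<and> cosine m T x y = 1 \<and> cosine m T x y \<ge> \<epsilon>}"
  have sub: "(\<Union>k<m. B k) \<subseteq> X"
    using cos1 assms(3) unfolding B_def X_def by (auto simp: T_def)
  have finX: "finite X"
    by (rule finite_subset[of _ "{..<D} \<times> {..<D}"]) (auto simp: X_def)
  have finB: "finite (B k)" for k
    by (rule finite_subset[of _ "{..<D} \<times> {..<D}"]) (auto simp: B_def T_def)
  have "card (\<Union>k<m. B k) = (\<Sum>k<m. card (B k))"
    by (rule card_UN_disjoint) (simp_all add: finB, auto simp: B_def T_def)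
  also have "\<dots> = (\<Sum>k<m. L choose 2)"
  proof (rule sum.cong[OF refl])
    fix k assume "k \<in> {..<m}"
    hence "k < m" by simp
    have "finite (T k)" unfolding Tint[OF \<open>k < m\<close>] by simp
    thus "card (B k) = L choose 2" unfolding B_def
      using pairs_card[of "T k"] cardT[OF \<open>k < m\<close>] by simp
  qed
  also have "\<dots> = m * (L choose 2)" by simp
  finally have "m * (L choose 2) \<le> card X" using card_mono[OF finX sub] by simp
  moreover have "\<forall>k<m. T k \<subseteq> {..<D} \<and> card (T k) \<le> L"
    using cardT by (auto simp: T_def)
  ultimately show ?thesis unfolding X_def m_def by blast
qed


theorem theorem2:
  fixes D L :: nat and \<epsilon> p :: real
  assumes "D \<ge> 2" and "0 < \<epsilon>" and "\<epsilon> \<le> 1" and "p = 2 * ln (real D)"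
  shows "(\<forall>N (T :: nat \<Rightarrow> nat set).
            (\<forall>k<N. T k \<subseteq> {..<D} \<and> card (T k) \<le> L) \<longrightarrow>
            measure_pmf.expectation (cosine_sample_emit p \<epsilon> N T)
               (\<lambda>f. real (shuffle_size N T f)) \<le> p / \<epsilon> * real L * real D)
       \<and> (L \<ge> 2 \<and> L dvd D \<longrightarrow>
            (\<exists>N (T :: nat \<Rightarrow> nat set).
               (\<forall>k<N. T k \<subseteq> {..<D} \<and> card (T k) \<le> L) \<and>
               card {(x, y). x < y \<and> y < D \<and> cosine N T x y = 1 \<and> cosine N T x y \<ge> \<epsilon>}
                 \<ge> (D div L) * (L choose 2)))"
proof -
  have "p \<ge> 0" using assms(1,4) by simp
  hence c: "p / \<epsilon> \<ge> 0" using assms(2) by simp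
  show ?thesis using part1[OF c] part2[OF _ _ assms(3)] by blast
qed

end
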